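(* Let $k>t+1$, $n>2k-t$, and let $\mathcal{S}_p$ be a maximal set of $k$-spaces in $\mathrm{PG}(n,q)$ pairwise intersecting in at least a $t$-space. Let $\psi(\mathcal{S}_p)=\min\{\dim T: T\text{ a subspace},\ \dim(T\cap\alpha)\geq t\ \forall\alpha\in\mathcal{S}_p\}$. If $\psi(\mathcal{S}_p)=t+x$ with $x\geq 2$, then \[|\mathcal{S}_p|\leq(\theta_{k-t})^x\left[{n-t-x\atop k-t-x}\right]_q\left[{t+x+1\atop t+1}\right]_q.\]
   Context: Dimensions are projective; $\left[{n\atop k}\right]_q=\frac{(q^n-1)\cdots(q^{n-k+1}-1)}{(q^k-1)\cdots(q-1)}$ for $k>0$, $=1$ for $k=0$; $\theta_m=\frac{q^{m+1}-1}{q-1}$. Maximal means no further $k$-space can be added keeping the property. *)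

theory Defs
  imports "HOL-Analysis.Analysis"
begin

text \<open>PG(n,q) is modelled by the vector space 'a^'m over a finite field 'a with
  q = CARD('a) and n = CARD('m) - 1. A projective d-space is a vector subspace of
  (vector) dimension d+1.\<close>

definition is_kspace :: "nat \<Rightarrow> ('a::field ^ 'm) set \<Rightarrow> bool" where
  "is_kspace k A \<longleftrightarrow> vec.subspace A \<and> vec.dim A = k + 1"

definition pairwise_t_intersecting :: "nat \<Rightarrow> ('a::field ^ 'm) set set \<Rightarrow> bool" where
  "pairwise_t_intersecting t S \<longleftrightarrow> (\<forall>A\<in>S. \<forall>B\<in>S. vec.dim (A \<inter> B) \<ge> t + 1)"

definition maximal_t_intersecting :: "nat \<Rightarrow> nat \<Rightarrow> ('a::field ^ 'm) set set \<Rightarrow> bool" where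
  "maximal_t_intersecting k t S \<longleftrightarrow>
     (\<forall>A\<in>S. is_kspace k A) \<and> pairwise_t_intersecting t S \<and>
     (\<forall>B. is_kspace k B \<and> B \<notin> S \<longrightarrow> \<not> pairwise_t_intersecting t (insert B S))"

definition psi :: "nat \<Rightarrow> ('a::field ^ 'm) set set \<Rightarrow> nat" where
  "psi t S = (LEAST d. \<exists>T. vec.subspace T \<and> vec.dim T = d + 1 \<and>
                           (\<forall>\<alpha>\<in>S. vec.dim (T \<inter> \<alpha>) \<ge> t + 1))"

definition gauss_binom :: "real \<Rightarrow> nat \<Rightarrow> nat \<Rightarrow> real" where
  "gauss_binom q n k = (\<Prod>i<k. q ^ (n - i) - 1) / (\<Prod>i<k. q ^ (i + 1) - 1)"

definition theta :: "real \<Rightarrow> nat \<Rightarrow> real" where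
  "theta q m = (q ^ (m + 1) - 1) / (q - 1)"

end

theory Submission
  imports Defs
begin

lemma card_span_indep:
  fixes B :: "('a::{finite,field}^'m) set"
  assumes "vec.independent B"
  shows "card (vec.span B) = CARD('a) ^ card B"
proof -
  have "finite B" by simp
  then show ?thesis using assms
  proof (induction B rule: finite_induct)
    case empty
    then show ?case by simp
  next
    case (insert b B)
    then have indB: "vec.independent B" and bB: "b \<notin> vec.span B"
      using vec.independent_insert[of b B] insert.hyps(2) by auto
    let ?f = "\<lambda>(c::'a, v). c *s b + v"
    have img: "vec.span (insert b B) = ?f ` (UNIV \<times> vec.span B)"
    proof (rule set_eqI, rule iffI)
      fix x assume "x \<in> vec.span (insert b B)"
      then obtain k where "x - k *s b \<in> vec.span B" using vec.span_breakdown_eq by blast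
      then show "x \<in> ?f ` (UNIV \<times> vec.span B)"
        by (intro image_eqI[of _ _ "(k, x - k *s b)"]) auto
    next
      fix x assume "x \<in> ?f ` (UNIV \<times> vec.span B)"
      then obtain c v where "v \<in> vec.span B" "x = c *s b + v" by auto
      then show "x \<in> vec.span (insert b B)"
        using vec.span_breakdown_eq[of x b B] by (intro vec.span_breakdown_eq[THEN iffD2] exI[of _ c]) simp
    qed
    have inj: "inj_on ?f (UNIV \<times> vec.span B)"
    proof (rule inj_onI, clarify)
      fix c v c' v'
      assume v: "v \<in> vec.span B" and v': "v' \<in> vec.span B" and eq: "c *s b + v = c' *s b + v'"
      show "c = c' \<and> v = v'"
      proof (cases "c = c'")
        case True then show ?thesis using eq by simp
      next
        case False
        have "(c - c') *s b = v' - v" using eq by (simp add: algebra_simps vector_sadd_rdistrib vector_ssub_ldistrib)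
        then have "b = inverse (c - c') *s (v' - v)" using False
          by (metis (no_types, lifting) divide_inverse_commute divide_self_if eq_iff_diff_eq_0 vector_smult_assoc vector_smult_lid)
        then have "b \<in> vec.span B" using v v' by (simp add: vec.span_diff vec.span_scale)
        then show ?thesis using bB by blast
      qed
    qed
    have "card (vec.span (insert b B)) = card ((UNIV::'a set) \<times> vec.span B)"
      unfolding img using inj by (simp add: card_image card_cartesian_product)
    also have "\<dots> = CARD('a) * CARD('a) ^ card B" using insert indB by (simp add: card_cartesian_product)
    finally show ?case using insert by simp
  qed
qed

lemma card_subspace:
  fixes U :: "('a::{finite,field}^'m) set"
  assumes "vec.subspace U"
  shows "card U = CARD('a) ^ vec.dim U"
proof -
  obtain B where "B \<subseteq> U" "vec.independent B" "U \<subseteq> vec.span B" "card B = vec.dim U"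
    using vec.basis_exists by blast
  moreover have "vec.span B = U" using calculation assms by (simp add: vec.span_subspace)
  ultimately show ?thesis using card_span_indep by metis
qed

lemma dim_span_insert:
  fixes U :: "('a::field^'m) set"
  assumes "vec.subspace U" "w \<notin> U"
  shows "vec.dim (vec.span (insert w U)) = vec.dim U + 1"
  using assms by (simp add: vec.dim_insert vec.span_eq_iff[THEN iffD2])

lemma card_field_ge2: "CARD('a::{finite,field}) \<ge> 2"
proof -
  have "card {0::'a, 1} = 2" by simp
  moreover have "card {0::'a, 1} \<le> CARD('a)" by (rule card_mono) auto
  ultimately show ?thesis by simp
qed

lemma double_count:
  fixes F :: "'b set set" and X :: "'b set" and a B :: real
  assumes "finite F" "finite X" "\<And>\<alpha>. \<alpha> \<in> F \<Longrightarrow> a \<le> real (card (\<alpha> \<inter> X))"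
    "\<And>w. w \<in> X \<Longrightarrow> real (card {\<alpha>\<in>F. w \<in> \<alpha>}) \<le> B"
  shows "a * real (card F) \<le> real (card X) * B"
proof -
  have "a * real (card F) = (\<Sum>\<alpha>\<in>F. a)" by simp
  also have "\<dots> \<le> (\<Sum>\<alpha>\<in>F. real (card (\<alpha> \<inter> X)))" using assms(3) by (rule sum_mono)
  also have "\<dots> = (\<Sum>\<alpha>\<in>F. \<Sum>w\<in>X. if w \<in> \<alpha> then 1 else 0)"
  proof (rule sum.cong[OF refl])
    fix \<alpha> show "real (card (\<alpha> \<inter> X)) = (\<Sum>w\<in>X. if w \<in> \<alpha> then 1 else 0)"
      using assms(2) by (simp add: sum.If_cases Int_commute)
  qed
  also have "\<dots> = (\<Sum>w\<in>X. \<Sum>\<alpha>\<in>F. if w \<in> \<alpha> then 1 else 0)" by (rule sum.swap)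
  also have "\<dots> = (\<Sum>w\<in>X. real (card {\<alpha>\<in>F. w \<in> \<alpha>}))"
  proof (rule sum.cong[OF refl])
    fix w show "(\<Sum>\<alpha>\<in>F. if w \<in> \<alpha> then 1 else 0) = real (card {\<alpha>\<in>F. w \<in> \<alpha>})"
      using assms(1) by (simp add: sum.If_cases Int_def)
  qed
  also have "\<dots> \<le> (\<Sum>w\<in>X. B)" using assms(4) by (rule sum_mono)
  also have "\<dots> = real (card X) * B" by simp
  finally show ?thesis .
qed

lemma gauss_rec:
  "gauss_binom q a (Suc b) = (q ^ a - 1) / (q ^ Suc b - 1) * gauss_binom q (a - 1) b"
proof -
  have "(\<Prod>i<Suc b. q ^ (a - i) - 1) = (q ^ a - 1) * (\<Prod>i<b. q ^ (a - 1 - i) - 1)"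
    unfolding prod.lessThan_Suc_shift by simp
  moreover have "(\<Prod>i<Suc b. q ^ (i + 1) - 1) = (\<Prod>i<b. q ^ (i + 1) - 1) * (q ^ Suc b - 1)"
    by simp
  ultimately show ?thesis unfolding gauss_binom_def by (simp add: divide_inverse mult_ac)
qed

lemma gauss_zero [simp]: "gauss_binom q a 0 = 1"
  by (simp add: gauss_binom_def)

lemma gauss_nonneg: "q \<ge> 1 \<Longrightarrow> gauss_binom q a b \<ge> 0"
  unfolding gauss_binom_def
  by (intro divide_nonneg_nonneg prod_nonneg) (simp_all add: one_le_power del: power_Suc)

lemma exists_complement_part:
  fixes U D :: "('a::field^'m) set"
  assumes "vec.subspace U" "vec.subspace D" "D \<subseteq> U" "m + vec.dim D \<le> vec.dim U"
  shows "\<exists>W. vec.subspace W \<and> W \<subseteq> U \<and> W \<inter> D = {0} \<and> vec.dim W = m"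
proof -
  obtain B0 where B0: "B0 \<subseteq> D" "vec.independent B0" "D \<subseteq> vec.span B0" "card B0 = vec.dim D"
    using vec.basis_exists by blast
  obtain B where B: "B0 \<subseteq> B" "B \<subseteq> U" "vec.independent B" "U \<subseteq> vec.span B"
    using vec.maximal_independent_subset_extend[of B0 U] B0 assms by blast
  have cB: "card B = vec.dim U" using vec.basis_card_eq_dim B by blast
  have finB: "finite B" using vec.finiteI_independent B(3) by blast
  have "card (B - B0) = vec.dim U - vec.dim D"
    using card_Diff_subset[of B0 B] finite_subset[OF B(1) finB] B0 B cB by simp
  moreover have "m \<le> vec.dim U - vec.dim D" using assms(4) by linarith
  ultimately obtain E where E: "E \<subseteq> B - B0" "card E = m"
    using obtain_subset_with_card_n[of m "B - B0"] by auto
  have indE: "vec.independent E" using vec.independent_mono[OF B(3)] E by blast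
  have finE: "finite E" using finite_subset[OF _ finB] E by blast
  have dimW: "vec.dim (vec.span E) = m" using indE E by (simp add: vec.dim_eq_card_independent)
  have WU: "vec.span E \<subseteq> U" using E B assms(1) by (intro vec.span_minimal) auto
  have spB0: "vec.span B0 = D" using B0 assms(2) by (simp add: vec.span_subspace)
  have indEB: "vec.independent (E \<union> B0)" using vec.independent_mono[OF B(3)] E B(1) by blast
  have cEB: "card (E \<union> B0) = m + card B0"
    using E finE finite_subset[OF B(1) finB] by (subst card_Un_disjoint) auto
  let ?sum = "{x + y |x y. x \<in> vec.span E \<and> y \<in> vec.span B0}"
  have "E \<union> B0 \<subseteq> ?sum"
  proof
    fix z assume "z \<in> E \<union> B0"
    then show "z \<in> ?sum"
    proof
      assume "z \<in> E" then show ?thesis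
        by (intro CollectI exI[of _ z] exI[of _ 0]) (simp add: vec.span_base vec.span_zero)
    next
      assume "z \<in> B0" then show ?thesis
        by (intro CollectI exI[of _ 0] exI[of _ z]) (simp add: vec.span_base vec.span_zero)
    qed
  qed
  then have "vec.dim (E \<union> B0) \<le> vec.dim ?sum" by (rule vec.dim_subset)
  then have "m + card B0 \<le> vec.dim ?sum"
    using vec.dim_eq_card_independent[OF indEB] cEB by simp
  moreover have "vec.dim ?sum + vec.dim (vec.span E \<inter> vec.span B0) = vec.dim (vec.span E) + vec.dim (vec.span B0)"
    by (rule vec.dim_sums_Int) auto
  moreover have "vec.dim (vec.span B0) = card B0" using B0(2) by (simp add: vec.dim_eq_card_independent)
  ultimately have "vec.dim (vec.span E \<inter> vec.span B0) = 0"
    using dimW by linarith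
  then have "vec.span E \<inter> vec.span B0 \<subseteq> {0}" by (simp only: vec.dim_eq_0)
  then have "vec.span E \<inter> D \<subseteq> {0}" by (simp only: spB0)
  moreover have "0 \<in> vec.span E \<inter> D" using assms(2) vec.subspace_0 vec.span_zero by blast
  ultimately have "vec.span E \<inter> D = {0}" by blast
  then show ?thesis using dimW WU by (intro exI[of _ "vec.span E"]) auto
qed

lemma arith_step:
  fixes q c g :: real
  assumes "q > 1" "D \<le> N" "s > 0" "(q ^ (D + s) - q ^ D) * c \<le> (q ^ N - q ^ D) * g"
  shows "c \<le> (q ^ (N - D) - 1) / (q ^ s - 1) * g"
proof -
  have e1: "q ^ (D + s) - q ^ D = q ^ D * (q ^ s - 1)" by (simp add: power_add algebra_simps)
  have "q ^ N = q ^ D * q ^ (N - D)" using assms(2) by (metis le_add_diff_inverse power_add)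
  then have e2: "q ^ N - q ^ D = q ^ D * (q ^ (N - D) - 1)" by (simp add: algebra_simps)
  have pD: "q ^ D > 0" using assms(1) by simp
  have ps: "q ^ s - 1 > 0" using assms(1,3) by (simp add: one_less_power)
  from assms(4) have "q ^ D * ((q ^ s - 1) * c) \<le> q ^ D * ((q ^ (N - D) - 1) * g)"
    unfolding e1 e2 by (simp add: mult_ac)
  then have "(q ^ s - 1) * c \<le> (q ^ (N - D) - 1) * g" using pD by simp
  then have "c * (q ^ s - 1) \<le> (q ^ (N - D) - 1) * g" by (simp add: mult.commute)
  then have "c \<le> (q ^ (N - D) - 1) * g / (q ^ s - 1)" using ps by (simp add: pos_le_divide_eq)
  then show ?thesis by simp
qed

lemma card_le_univ: "card (X::('a::{finite,field}^'m) set) \<le> CARD('a) ^ CARD('m)"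
proof -
  have "card X \<le> card (UNIV::('a^'m) set)" by (rule card_mono) auto
  then show ?thesis by simp
qed

lemma span_insert_sub:
  "vec.subspace \<alpha> \<Longrightarrow> \<sigma> \<subseteq> \<alpha> \<Longrightarrow> w \<in> \<alpha> \<Longrightarrow> vec.span (insert w \<sigma>) \<subseteq> \<alpha>"
  by (intro vec.span_minimal) auto

lemma dim_le_N:
  fixes \<sigma> :: "('a::{finite,field}^'m) set"
  assumes "vec.subspace \<sigma>"
  shows "vec.dim \<sigma> \<le> CARD('m)"
proof -
  have "CARD('a) ^ vec.dim \<sigma> \<le> CARD('a) ^ CARD('m)"
    using card_subspace[OF assms] card_le_univ[of \<sigma>] by simp
  moreover have "1 < CARD('a)" using card_field_ge2[where 'a='a] by simp
  ultimately show ?thesis using power_le_imp_le_exp by blast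
qed

lemma real_card_subspace:
  fixes U :: "('a::{finite,field}^'m) set"
  assumes "vec.subspace U"
  shows "real (card U) = real CARD('a) ^ vec.dim U"
  using card_subspace[OF assms] by simp

lemma phase3:
  fixes S :: "('a::{finite,field}^'m) set set"
  assumes Sk: "\<And>\<alpha>. \<alpha> \<in> S \<Longrightarrow> vec.subspace \<alpha> \<and> vec.dim \<alpha> = K"
  shows "vec.subspace \<sigma> \<Longrightarrow> vec.dim \<sigma> + j = K \<Longrightarrow>
    real (card {\<alpha>\<in>S. \<sigma> \<subseteq> \<alpha>}) \<le> gauss_binom (real CARD('a)) (CARD('m) - vec.dim \<sigma>) j"
proof (induction j arbitrary: \<sigma>)
  case 0
  have "{\<alpha>\<in>S. \<sigma> \<subseteq> \<alpha>} \<subseteq> {\<sigma>}" using Sk 0 vec.subspace_dim_equal by fastforce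
  then have "card {\<alpha>\<in>S. \<sigma> \<subseteq> \<alpha>} \<le> 1" using card_mono[of "{\<sigma>}"] by fastforce
  then show ?case by simp
next
  case (Suc j)
  define q where "q = real CARD('a)"
  define D where "D = vec.dim \<sigma>"
  define N where "N = CARD('m)"
  have q1: "q > 1" using card_field_ge2[where 'a='a] unfolding q_def by simp
  let ?F = "{\<alpha>\<in>S. \<sigma> \<subseteq> \<alpha>}"
  let ?X = "UNIV - \<sigma>"
  have cs: "real (card \<sigma>) = q ^ D" using real_card_subspace[OF Suc.prems(1)] unfolding q_def D_def .
  have DN: "D \<le> N" using dim_le_N[OF Suc.prems(1)] unfolding D_def N_def .
  have cX: "real (card ?X) = q ^ N - q ^ D"
  proof -
    have "card ?X = card (UNIV :: ('a^'m) set) - card \<sigma>" by (simp add: card_Diff_subset)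
    moreover have "card \<sigma> \<le> card (UNIV :: ('a^'m) set)" using card_le_univ[of \<sigma>] by simp
    ultimately have "real (card ?X) = real (card (UNIV :: ('a^'m) set)) - real (card \<sigma>)" by simp
    then show ?thesis using cs unfolding q_def N_def by simp
  qed
  have a: "q ^ K - q ^ D \<le> real (card (\<alpha> \<inter> ?X))" if "\<alpha> \<in> ?F" for \<alpha>
  proof -
    have sa: "\<sigma> \<subseteq> \<alpha>" and al: "vec.subspace \<alpha>" "vec.dim \<alpha> = K" using that Sk by auto
    have "\<alpha> \<inter> ?X = \<alpha> - \<sigma>" by blast
    then have "card (\<alpha> \<inter> ?X) = card \<alpha> - card \<sigma>" using sa by (simp add: card_Diff_subset)
    moreover have "card \<sigma> \<le> card \<alpha>" using sa by (simp add: card_mono)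
    ultimately have "real (card (\<alpha> \<inter> ?X)) = real (card \<alpha>) - real (card \<sigma>)" by simp
    then show ?thesis using cs real_card_subspace[OF al(1)] al(2) unfolding q_def by simp
  qed
  have b: "real (card {\<alpha>\<in>?F. w \<in> \<alpha>}) \<le> gauss_binom q (N - D - 1) j" if "w \<in> ?X" for w
  proof -
    let ?\<rho> = "vec.span (insert w \<sigma>)"
    have w: "w \<notin> \<sigma>" using that by simp
    have r1: "vec.subspace ?\<rho>" by simp
    have r2: "vec.dim ?\<rho> = D + 1" using dim_span_insert[OF Suc.prems(1) w] unfolding D_def .
    have "{\<alpha>\<in>?F. w \<in> \<alpha>} \<subseteq> {\<alpha>\<in>S. ?\<rho> \<subseteq> \<alpha>}"
      using Sk span_insert_sub by blast
    then have "card {\<alpha>\<in>?F. w \<in> \<alpha>} \<le> card {\<alpha>\<in>S. ?\<rho> \<subseteq> \<alpha>}" by (simp add: card_mono)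
    moreover have "real (card {\<alpha>\<in>S. ?\<rho> \<subseteq> \<alpha>}) \<le> gauss_binom q (N - vec.dim ?\<rho>) j"
      using Suc.IH[OF r1] r2 Suc.prems(2) unfolding q_def N_def D_def by simp
    ultimately show ?thesis using r2 by simp
  qed
  have "(q ^ K - q ^ D) * real (card ?F) \<le> real (card ?X) * gauss_binom q (N - D - 1) j"
    by (rule double_count) (use a b in auto)
  then have ineq: "(q ^ (D + Suc j) - q ^ D) * real (card ?F) \<le> (q ^ N - q ^ D) * gauss_binom q (N - D - 1) j"
    using cX Suc.prems(2) unfolding D_def by simp
  then have "real (card ?F) \<le> (q ^ (N - D) - 1) / (q ^ Suc j - 1) * gauss_binom q (N - D - 1) j"
    using arith_step[OF q1 DN _ ineq] by simp
  then show ?case unfolding gauss_rec q_def N_def D_def by simp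
qed

lemma phase2:
  fixes S :: "('a::{finite,field}^'m) set set"
  assumes Sk: "\<And>\<alpha>. \<alpha> \<in> S \<Longrightarrow> vec.subspace \<alpha> \<and> vec.dim \<alpha> = K"
    and pw: "\<And>\<alpha> \<beta>. \<alpha> \<in> S \<Longrightarrow> \<beta> \<in> S \<Longrightarrow> \<tau> \<le> vec.dim (\<alpha> \<inter> \<beta>)"
    and \<tau>K: "\<tau> \<le> K"
    and H: "\<And>T. vec.subspace T \<Longrightarrow> 1 \<le> vec.dim T \<Longrightarrow> vec.dim T < M \<Longrightarrow> \<exists>\<beta>\<in>S. vec.dim (T \<inter> \<beta>) < \<tau>"
    and base: "\<And>\<sigma>. vec.subspace \<sigma> \<Longrightarrow> vec.dim \<sigma> = M \<Longrightarrow> real (card {\<alpha>\<in>S. \<sigma> \<subseteq> \<alpha>}) \<le> G"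
  shows "vec.subspace \<sigma> \<Longrightarrow> 1 \<le> vec.dim \<sigma> \<Longrightarrow> vec.dim \<sigma> + j = M \<Longrightarrow>
    real (card {\<alpha>\<in>S. \<sigma> \<subseteq> \<alpha>}) \<le> theta (real CARD('a)) (K - \<tau>) ^ j * G"
proof (induction j arbitrary: \<sigma>)
  case 0
  then show ?case using base by simp
next
  case (Suc j)
  define q where "q = real CARD('a)"
  define D where "D = vec.dim \<sigma>"
  define m where "m = K - \<tau> + 1"
  have q1: "q > 1" using card_field_ge2[where 'a='a] unfolding q_def by simp
  obtain \<beta> where \<beta>: "\<beta> \<in> S" "vec.dim (\<sigma> \<inter> \<beta>) < \<tau>"
    using H[OF Suc.prems(1,2)] Suc.prems(3) by auto
  have b1: "vec.subspace \<beta>" "vec.dim \<beta> = K" using Sk \<beta>(1) by auto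
  have sb: "vec.subspace (\<sigma> \<inter> \<beta>)" using Suc.prems(1) b1(1) by (rule vec.subspace_inter)
  have ineqm: "m + vec.dim (\<sigma> \<inter> \<beta>) \<le> vec.dim \<beta>" using \<beta>(2) b1(2) \<tau>K unfolding m_def by linarith
  obtain W where W: "vec.subspace W" "W \<subseteq> \<beta>" "W \<inter> (\<sigma> \<inter> \<beta>) = {0}" "vec.dim W = m"
    using exists_complement_part[OF b1(1) sb _ ineqm] by blast
  have W\<sigma>: "W \<inter> \<sigma> = {0}" using W(2,3) by blast
  let ?F = "{\<alpha>\<in>S. \<sigma> \<subseteq> \<alpha>}"
  let ?X = "W - {0}"
  have cW: "real (card W) = q ^ m" using real_card_subspace[OF W(1)] W(4) unfolding q_def by simp
  have cX: "real (card ?X) = q ^ m - 1"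
  proof -
    have "0 \<in> W" using W(1) vec.subspace_0 by blast
    then have "card ?X = card W - 1" by simp
    moreover have "card W \<ge> 1" using \<open>0 \<in> W\<close> by (auto simp: Suc_le_eq card_gt_0_iff)
    ultimately show ?thesis using cW by simp
  qed
  have a: "q - 1 \<le> real (card (\<alpha> \<inter> ?X))" if "\<alpha> \<in> ?F" for \<alpha>
  proof -
    have al: "\<alpha> \<in> S" "vec.subspace \<alpha>" using that Sk by auto
    have ab: "vec.subspace (\<alpha> \<inter> \<beta>)" using al(2) b1(1) by (rule vec.subspace_inter)
    have d1: "\<tau> \<le> vec.dim (\<alpha> \<inter> \<beta>)" using pw[OF al(1) \<beta>(1)] .
    let ?sum = "{x + y |x y. x \<in> \<alpha> \<inter> \<beta> \<and> y \<in> W}"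
    have "?sum \<subseteq> \<beta>" using W(2) by (auto intro!: vec.subspace_add[OF b1(1)])
    then have "vec.dim ?sum \<le> K" using vec.dim_subset[of ?sum \<beta>] b1(2) by simp
    moreover have "vec.dim ?sum + vec.dim ((\<alpha> \<inter> \<beta>) \<inter> W) = vec.dim (\<alpha> \<inter> \<beta>) + vec.dim W"
      by (rule vec.dim_sums_Int[OF ab W(1)])
    ultimately have "1 \<le> vec.dim ((\<alpha> \<inter> \<beta>) \<inter> W)" using d1 W(4) \<tau>K unfolding m_def by linarith
    moreover have "(\<alpha> \<inter> \<beta>) \<inter> W = \<alpha> \<inter> W" using W(2) by blast
    ultimately have d2: "1 \<le> vec.dim (\<alpha> \<inter> W)" by simp
    have aW: "vec.subspace (\<alpha> \<inter> W)" using al(2) W(1) by (rule vec.subspace_inter)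
    have "q ^ 1 \<le> q ^ vec.dim (\<alpha> \<inter> W)" using q1 d2 by (intro power_increasing) auto
    then have c1: "q \<le> real (card (\<alpha> \<inter> W))" using real_card_subspace[OF aW] unfolding q_def by simp
    have "0 \<in> \<alpha> \<inter> W" using aW vec.subspace_0 by blast
    moreover have "\<alpha> \<inter> ?X = (\<alpha> \<inter> W) - {0}" by blast
    ultimately have "card (\<alpha> \<inter> ?X) = card (\<alpha> \<inter> W) - 1" by simp
    moreover have "card (\<alpha> \<inter> W) \<ge> 1" using c1 q1 by linarith
    ultimately show ?thesis using c1 by simp
  qed
  have b: "real (card {\<alpha>\<in>?F. w \<in> \<alpha>}) \<le> theta q (K - \<tau>) ^ j * G" if "w \<in> ?X" for w
  proof -
    let ?\<rho> = "vec.span (insert w \<sigma>)"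
    have w: "w \<notin> \<sigma>" using that W\<sigma> by blast
    have r1: "vec.subspace ?\<rho>" by simp
    have r2: "vec.dim ?\<rho> = D + 1" using dim_span_insert[OF Suc.prems(1) w] unfolding D_def .
    have "{\<alpha>\<in>?F. w \<in> \<alpha>} \<subseteq> {\<alpha>\<in>S. ?\<rho> \<subseteq> \<alpha>}"
      using Sk span_insert_sub by blast
    then have "card {\<alpha>\<in>?F. w \<in> \<alpha>} \<le> card {\<alpha>\<in>S. ?\<rho> \<subseteq> \<alpha>}" by (simp add: card_mono)
    moreover have "real (card {\<alpha>\<in>S. ?\<rho> \<subseteq> \<alpha>}) \<le> theta q (K - \<tau>) ^ j * G"
      using Suc.IH[OF r1] r2 Suc.prems(3) unfolding q_def D_def by simp
    ultimately show ?thesis by simp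
  qed
  have "(q - 1) * real (card ?F) \<le> real (card ?X) * (theta q (K - \<tau>) ^ j * G)"
    by (rule double_count) (use a b in auto)
  moreover have th: "(q - 1) * theta q (K - \<tau>) = q ^ m - 1" unfolding theta_def m_def using q1 by simp
  ultimately have "(q - 1) * real (card ?F) \<le> (q - 1) * (theta q (K - \<tau>) * (theta q (K - \<tau>) ^ j * G))"
    using cX by (simp add: mult.assoc[symmetric])
  then have "real (card ?F) \<le> theta q (K - \<tau>) * (theta q (K - \<tau>) ^ j * G)" using q1 by simp
  then show ?case unfolding q_def by (simp add: mult_ac)
qed

lemma phase1:
  fixes S :: "('a::{finite,field}^'m) set set"
  assumes Sk: "\<And>\<alpha>. \<alpha> \<in> S \<Longrightarrow> vec.subspace \<alpha> \<and> vec.dim \<alpha> = K"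
    and T0: "vec.subspace T0" "vec.dim T0 = M"
    and meet: "\<And>\<alpha>. \<alpha> \<in> S \<Longrightarrow> \<tau> \<le> vec.dim (T0 \<inter> \<alpha>)"
    and \<tau>M: "\<tau> \<le> M"
    and base: "\<And>\<rho>. vec.subspace \<rho> \<Longrightarrow> vec.dim \<rho> = \<tau> \<Longrightarrow> real (card {\<alpha>\<in>S. \<rho> \<subseteq> \<alpha>}) \<le> C"
  shows "vec.subspace \<sigma> \<Longrightarrow> \<sigma> \<subseteq> T0 \<Longrightarrow> vec.dim \<sigma> + j = \<tau> \<Longrightarrow>
    real (card {\<alpha>\<in>S. \<sigma> \<subseteq> \<alpha>}) \<le> gauss_binom (real CARD('a)) (M - vec.dim \<sigma>) j * C"
proof (induction j arbitrary: \<sigma>)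
  case 0
  then show ?case using base by simp
next
  case (Suc j)
  define q where "q = real CARD('a)"
  define D where "D = vec.dim \<sigma>"
  have q1: "q > 1" using card_field_ge2[where 'a='a] unfolding q_def by simp
  let ?F = "{\<alpha>\<in>S. \<sigma> \<subseteq> \<alpha>}"
  let ?X = "T0 - \<sigma>"
  have cs: "real (card \<sigma>) = q ^ D" using real_card_subspace[OF Suc.prems(1)] unfolding q_def D_def .
  have DM: "D \<le> M" using Suc.prems(3) \<tau>M unfolding D_def by simp
  have cX: "real (card ?X) = q ^ M - q ^ D"
  proof -
    have "card ?X = card T0 - card \<sigma>" using Suc.prems(2) by (simp add: card_Diff_subset)
    moreover have "card \<sigma> \<le> card T0" using Suc.prems(2) by (simp add: card_mono)
    ultimately have "real (card ?X) = real (card T0) - real (card \<sigma>)" by simp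
    then show ?thesis using cs real_card_subspace[OF T0(1)] T0(2) unfolding q_def by simp
  qed
  have a: "q ^ \<tau> - q ^ D \<le> real (card (\<alpha> \<inter> ?X))" if "\<alpha> \<in> ?F" for \<alpha>
  proof -
    have sa: "\<sigma> \<subseteq> \<alpha>" and al: "\<alpha> \<in> S" "vec.subspace \<alpha>" using that Sk by auto
    have aT: "vec.subspace (\<alpha> \<inter> T0)" using al(2) T0(1) by (rule vec.subspace_inter)
    have "\<tau> \<le> vec.dim (\<alpha> \<inter> T0)" using meet[OF al(1)] by (simp add: Int_commute)
    then have "q ^ \<tau> \<le> q ^ vec.dim (\<alpha> \<inter> T0)" using q1 by (intro power_increasing) auto
    then have c1: "q ^ \<tau> \<le> real (card (\<alpha> \<inter> T0))" using real_card_subspace[OF aT] unfolding q_def by simp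
    have sub: "\<sigma> \<subseteq> \<alpha> \<inter> T0" using sa Suc.prems(2) by blast
    have "\<alpha> \<inter> ?X = (\<alpha> \<inter> T0) - \<sigma>" by blast
    then have "card (\<alpha> \<inter> ?X) = card (\<alpha> \<inter> T0) - card \<sigma>" using sub by (simp add: card_Diff_subset)
    moreover have "card \<sigma> \<le> card (\<alpha> \<inter> T0)" using sub by (simp add: card_mono)
    ultimately have "real (card (\<alpha> \<inter> ?X)) = real (card (\<alpha> \<inter> T0)) - real (card \<sigma>)" by simp
    then show ?thesis using cs c1 by simp
  qed
  have b: "real (card {\<alpha>\<in>?F. w \<in> \<alpha>}) \<le> gauss_binom q (M - D - 1) j * C" if "w \<in> ?X" for w
  proof -
    let ?\<rho> = "vec.span (insert w \<sigma>)"
    have w: "w \<notin> \<sigma>" using that by simp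
    have r1: "vec.subspace ?\<rho>" by simp
    have r2: "vec.dim ?\<rho> = D + 1" using dim_span_insert[OF Suc.prems(1) w] unfolding D_def .
    have r3: "?\<rho> \<subseteq> T0" using span_insert_sub[OF T0(1) Suc.prems(2)] that by blast
    have "{\<alpha>\<in>?F. w \<in> \<alpha>} \<subseteq> {\<alpha>\<in>S. ?\<rho> \<subseteq> \<alpha>}"
      using Sk span_insert_sub by blast
    then have "card {\<alpha>\<in>?F. w \<in> \<alpha>} \<le> card {\<alpha>\<in>S. ?\<rho> \<subseteq> \<alpha>}" by (simp add: card_mono)
    moreover have "real (card {\<alpha>\<in>S. ?\<rho> \<subseteq> \<alpha>}) \<le> gauss_binom q (M - vec.dim ?\<rho>) j * C"
      using Suc.IH[OF r1 r3] r2 Suc.prems(3) unfolding q_def D_def by simp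
    ultimately show ?thesis using r2 by simp
  qed
  have "(q ^ \<tau> - q ^ D) * real (card ?F) \<le> real (card ?X) * (gauss_binom q (M - D - 1) j * C)"
    by (rule double_count) (use a b in auto)
  then have ineq: "(q ^ (D + Suc j) - q ^ D) * real (card ?F) \<le> (q ^ M - q ^ D) * (gauss_binom q (M - D - 1) j * C)"
    using cX Suc.prems(3) unfolding D_def by simp
  have "real (card ?F) \<le> (q ^ (M - D) - 1) / (q ^ Suc j - 1) * (gauss_binom q (M - D - 1) j * C)"
    using arith_step[OF q1 DM _ ineq] by simp
  then show ?case unfolding gauss_rec q_def D_def by (simp add: mult_ac)
qed

theorem mainTheorem9:
  fixes S :: "('a::{finite,field} ^ 'm) set set"
    and n k t x :: nat and q :: real
  assumes "q = real CARD('a)"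
    and "n = CARD('m) - 1"
    and "k > t + 1"
    and "n + t > 2 * k"
    and "maximal_t_intersecting k t S"
    and "psi t S = t + x"
    and "x \<ge> 2"
  shows "real (card S) \<le> (theta q (k - t)) ^ x * gauss_binom q (n - t - x) (k - t - x)
                           * gauss_binom q (t + x + 1) (t + 1)"
proof -
  have q1: "q > 1" using card_field_ge2[where 'a='a] assms(1) by simp
  have Sk: "\<And>\<alpha>. \<alpha> \<in> S \<Longrightarrow> vec.subspace \<alpha> \<and> vec.dim \<alpha> = k + 1"
    using assms(5) unfolding maximal_t_intersecting_def is_kspace_def by blast
  have pw: "\<And>\<alpha> \<beta>. \<alpha> \<in> S \<Longrightarrow> \<beta> \<in> S \<Longrightarrow> t + 1 \<le> vec.dim (\<alpha> \<inter> \<beta>)"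
    using assms(5) unfolding maximal_t_intersecting_def pairwise_t_intersecting_def by blast
  have thnn: "theta q (k - t) \<ge> 0" unfolding theta_def using q1
    by (intro divide_nonneg_nonneg) (simp_all add: one_le_power del: power_Suc)
  show ?thesis
  proof (cases "S = {}")
    case True
    then show ?thesis using thnn gauss_nonneg[of q] q1 by simp
  next
    case False
    then obtain \<alpha>0 where \<alpha>0: "\<alpha>0 \<in> S" by blast
    define P where "P d \<longleftrightarrow> (\<exists>T. vec.subspace T \<and> vec.dim T = d + 1 \<and>
                           (\<forall>\<alpha>\<in>S. vec.dim (T \<inter> \<alpha>) \<ge> t + 1))" for d
    have psiP: "psi t S = (LEAST d. P d)" unfolding psi_def P_def by simp
    have Pk: "P k" unfolding P_def using Sk[OF \<alpha>0] pw[OF \<alpha>0] by blast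
    have "P (t + x)" using LeastI[of P, OF Pk] psiP assms(6) by simp
    then obtain T0 where T0: "vec.subspace T0" "vec.dim T0 = t + x + 1"
      "\<And>\<alpha>. \<alpha> \<in> S \<Longrightarrow> t + 1 \<le> vec.dim (T0 \<inter> \<alpha>)" unfolding P_def by auto
    have txk: "t + x \<le> k" using Least_le[of P, OF Pk] psiP assms(6) by simp
    have H: "\<exists>\<beta>\<in>S. vec.dim (T \<inter> \<beta>) < t + 1"
      if "vec.subspace T" "1 \<le> vec.dim T" "vec.dim T < t + x + 1" for T
    proof -
      have "vec.dim T - 1 < (LEAST d. P d)" using that psiP assms(6) by simp
      then have "\<not> P (vec.dim T - 1)" by (rule not_less_Least)
      then show ?thesis unfolding P_def using that by force
    qed
    define G where "G = gauss_binom q (CARD('m) - (t + x + 1)) (k + 1 - (t + x + 1))"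
    have base3: "real (card {\<alpha>\<in>S. \<sigma> \<subseteq> \<alpha>}) \<le> G"
      if "vec.subspace \<sigma>" "vec.dim \<sigma> = t + x + 1" for \<sigma>
      using phase3[OF Sk, where \<sigma>=\<sigma> and j="k + 1 - (t + x + 1)"] that txk unfolding G_def assms(1) by simp
    have base2: "real (card {\<alpha>\<in>S. \<rho> \<subseteq> \<alpha>}) \<le> theta q (k - t) ^ x * G"
      if "vec.subspace \<rho>" "vec.dim \<rho> = t + 1" for \<rho>
      using phase2[OF Sk pw _ H base3, where \<sigma>=\<rho> and j=x] that txk unfolding assms(1) by simp
    have "real (card {\<alpha>\<in>S. {0} \<subseteq> \<alpha>}) \<le> gauss_binom q (t + x + 1 - vec.dim {0::'a^'m}) (t + 1) * (theta q (k - t) ^ x * G)"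
      using phase1[OF Sk T0(1,2) T0(3) _ base2, where \<sigma>="{0}" and j="t + 1"] T0(1) unfolding assms(1)
      by (simp add: vec.subspace_0)
    moreover have "{\<alpha>\<in>S. {0} \<subseteq> \<alpha>} = S" using Sk vec.subspace_0 by blast
    ultimately have "real (card S) \<le> gauss_binom q (t + x + 1) (t + 1) * (theta q (k - t) ^ x * G)" by simp
    moreover have "G = gauss_binom q (n - t - x) (k - t - x)" unfolding G_def assms(2) by simp
    ultimately show ?thesis by (simp add: mult_ac)
  qed
qed

end
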